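(* Let $\Sigma$ be a finite alphabet with $k=|\Sigma|$, and let $h:\Sigma\to\{1,\dots,k\}$ be a fixed bijection. Two NFAs $\mathcal{A}_1$ and $\mathcal{A}_2$ over $\Sigma$ are isomorphic if and only if the directed graphs $G_{\mathcal{A}_1}$ and $G_{\mathcal{A}_2}$ are isomorphic.
   Context: An NFA over $\Sigma$ is a tuple $(Q,\Sigma,\Delta,I,F)$ with $Q$ finite, $\Delta\subseteq Q\times\Sigma\times Q$, $I,F\subseteq Q$. Two NFAs are isomorphic if there is a bijection $\varphi$ between their state sets mapping initial states onto initial states, final states onto final states, and with $(p,a,q)\in\Delta_1\iff(\varphi(p),a,\varphi(q))\in\Delta_2$. For $\mathcal{A}=(Q,\Sigma,\Delta,I,F)$, the directed graph (loops allowed) $G_\mathcal{A}=(V,E)$ has as vertex set the disjoint union of: $Q$; $\Delta$ (each transition is a vertex); the vertices $(q,i)$ for $q\in I\setminus F$, $1\le i\le k+1$, for $q\in F\setminus I$, $1\le i\le k+2$, and for $q\in I\cap F$, $1\le i\le k+3$; and the vertices $(t,i)$ for $t=(p,a,q)\in\Delta$, $1\le i\le h(a)$. Its edges are: $(p,t)$ and $(t,q)$ for each $t=(p,a,q)\in\Delta$; $(t,(t,1))$ for each $t\in\Delta$; $((t,i),(t,j))$ for all $t=(p,a,q)\in\Delta$ and all $1\le i,j\le h(a)$; $((q,i),(q,j))$ for all $q\in I\cup F$ and all $i,j$ in the range given for $q$ above; and $(q,(q,1))$ for each $q\in I\cup F$. Two directed graphs are isomorphic if there is a bijection of vertex sets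 preserving edges in both directions. *)

theory Defs
  imports Main
begin

record ('q, 'a) nfa =
  states :: "'q set"
  trans  :: "('q \<times> 'a \<times> 'q) set"
  init   :: "'q set"
  fin    :: "'q set"

definition nfa_wf :: "'a set \<Rightarrow> ('q, 'a) nfa \<Rightarrow> bool" where
  "nfa_wf Sig A \<longleftrightarrow> finite (states A) \<and>
     trans A \<subseteq> states A \<times> Sig \<times> states A \<and>
     init A \<subseteq> states A \<and> fin A \<subseteq> states A"

definition nfa_iso :: "('q1, 'a) nfa \<Rightarrow> ('q2, 'a) nfa \<Rightarrow> bool" where
  "nfa_iso A1 A2 \<longleftrightarrow> (\<exists>\<phi>. bij_betw \<phi> (states A1) (states A2) \<and>
     \<phi> ` init A1 = init A2 \<and> \<phi> ` fin A1 = fin A2 \<and>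
     (\<forall>p\<in>states A1. \<forall>a. \<forall>q\<in>states A1.
        (p, a, q) \<in> trans A1 \<longleftrightarrow> (\<phi> p, a, \<phi> q) \<in> trans A2))"

type_synonym 'v digraph = "'v set \<times> ('v \<times> 'v) set"

definition digraph_iso :: "'v digraph \<Rightarrow> 'w digraph \<Rightarrow> bool" where
  "digraph_iso G1 G2 \<longleftrightarrow> (\<exists>f. bij_betw f (fst G1) (fst G2) \<and>
     (\<forall>u\<in>fst G1. \<forall>v\<in>fst G1. (u, v) \<in> snd G1 \<longleftrightarrow> (f u, f v) \<in> snd G2))"

datatype ('q, 'a) gvert =
    St 'q
  | Tr "'q \<times> 'a \<times> 'q"
  | SAux 'q nat
  | TAux "'q \<times> 'a \<times> 'q" nat

text \<open>Number of auxiliary vertices attached to a state q.\<close>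
definition state_cnt :: "nat \<Rightarrow> ('q, 'a) nfa \<Rightarrow> 'q \<Rightarrow> nat" where
  "state_cnt k A q =
     (if q \<in> init A - fin A then k + 1
      else if q \<in> fin A - init A then k + 2
      else if q \<in> init A \<inter> fin A then k + 3 else 0)"

definition lbl :: "'q \<times> 'a \<times> 'q \<Rightarrow> 'a" where
  "lbl t = fst (snd t)"

definition nfa_graph :: "('a \<Rightarrow> nat) \<Rightarrow> nat \<Rightarrow> ('q, 'a) nfa \<Rightarrow> ('q, 'a) gvert digraph" where
  "nfa_graph h k A =
    (St ` states A \<union> Tr ` trans A
       \<union> {SAux q i | q i. q \<in> init A \<union> fin A \<and> 1 \<le> i \<and> i \<le> state_cnt k A q}
       \<union> {TAux t i | t i. t \<in> trans A \<and> 1 \<le> i \<and> i \<le> h (lbl t)},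
     {(St p, Tr (p, a, q)) | p a q. (p, a, q) \<in> trans A}
       \<union> {(Tr (p, a, q), St q) | p a q. (p, a, q) \<in> trans A}
       \<union> {(Tr t, TAux t 1) | t. t \<in> trans A}
       \<union> {(TAux t i, TAux t j) | t i j. t \<in> trans A \<and> 1 \<le> i \<and> i \<le> h (lbl t)
                                     \<and> 1 \<le> j \<and> j \<le> h (lbl t)}
       \<union> {(SAux q i, SAux q j) | q i j. q \<in> init A \<union> fin A
             \<and> 1 \<le> i \<and> i \<le> state_cnt k A q \<and> 1 \<le> j \<and> j \<le> state_cnt k A q}
       \<union> {(St q, SAux q 1) | q. q \<in> init A \<union> fin A})"

end

theory Submission imports Defs begin
fun edgeP :: "('q,'a) nfa \<Rightarrow> ('a\<Rightarrow>nat) \<Rightarrow> nat \<Rightarrow> ('q,'a) gvert \<Rightarrow> ('q,'a) gvert \<Rightarrow> bool" where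
  "edgeP A h k (St p) (Tr t) = (t \<in> trans A \<and> fst t = p)"
| "edgeP A h k (Tr t) (St q) = (t \<in> trans A \<and> snd (snd t) = q)"
| "edgeP A h k (Tr t) (TAux t' i) = (t \<in> trans A \<and> t' = t \<and> i = 1)"
| "edgeP A h k (TAux t i) (TAux t' j) = (t \<in> trans A \<and> t' = t \<and> 1 \<le> i \<and> i \<le> h (lbl t) \<and> 1 \<le> j \<and> j \<le> h (lbl t))"
| "edgeP A h k (SAux q i) (SAux q' j) = (q \<in> init A \<union> fin A \<and> q' = q \<and> 1 \<le> i \<and> i \<le> state_cnt k A q \<and> 1 \<le> j \<and> j \<le> state_cnt k A q)"
| "edgeP A h k (St q) (SAux q' i) = (q \<in> init A \<union> fin A \<and> q' = q \<and> i = 1)"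
| "edgeP A h k _ _ = False"

fun vertP :: "('q,'a) nfa \<Rightarrow> ('a\<Rightarrow>nat) \<Rightarrow> nat \<Rightarrow> ('q,'a) gvert \<Rightarrow> bool" where
  "vertP A h k (St q) = (q \<in> states A)"
| "vertP A h k (Tr t) = (t \<in> trans A)"
| "vertP A h k (SAux q i) = (q \<in> init A \<union> fin A \<and> 1 \<le> i \<and> i \<le> state_cnt k A q)"
| "vertP A h k (TAux t i) = (t \<in> trans A \<and> 1 \<le> i \<and> i \<le> h (lbl t))"

lemma V_iff: "v \<in> fst (nfa_graph h k A) \<longleftrightarrow> vertP A h k v"
  by (cases v) (auto simp: nfa_graph_def)

lemma E_iff: "(u,v) \<in> snd (nfa_graph h k A) \<longleftrightarrow> edgeP A h k u v"
  by (cases u; cases v) (auto simp: nfa_graph_def)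

definition lp :: "('v\<times>'v) set \<Rightarrow> 'v \<Rightarrow> bool" where "lp E v \<longleftrightarrow> (v,v) \<in> E"
definition deg :: "('v\<times>'v) set \<Rightarrow> 'v \<Rightarrow> nat" where "deg E v = card {u. (v,u) \<in> E}"
definition col :: "('v\<times>'v) set \<Rightarrow> 'v \<Rightarrow> nat set" where
  "col E v = deg E ` {w. (v,w) \<in> E \<and> lp E w}"
definition isTr :: "nat \<Rightarrow> ('v\<times>'v) set \<Rightarrow> 'v \<Rightarrow> bool" where
  "isTr k E v \<longleftrightarrow> \<not> lp E v \<and> (\<exists>m\<in>col E v. m \<le> k)"

lemma iso_inv:
  assumes f: "bij_betw f V1 V2" and e: "\<forall>u\<in>V1. \<forall>v\<in>V1. (u,v) \<in> E1 \<longleftrightarrow> (f u, f v) \<in> E2"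
    and s1: "E1 \<subseteq> V1 \<times> V1" and s2: "E2 \<subseteq> V2 \<times> V2" and v: "v \<in> V1"
  shows "lp E2 (f v) = lp E1 v" "deg E2 (f v) = deg E1 v" "col E2 (f v) = col E1 v"
    "isTr k E2 (f v) = isTr k E1 v"
proof -
  have inj: "inj_on f V1" and im: "f ` V1 = V2" using f by (auto simp: bij_betw_def)
  have lpv: "lp E2 (f v) = lp E1 v" if "v \<in> V1" for v using e that unfolding lp_def by blast
  then show "lp E2 (f v) = lp E1 v" using v .
  have outs: "{u. (f v,u) \<in> E2} = f ` {u. (v,u) \<in> E1}" if "v \<in> V1" for v
  proof
    show "{u. (f v,u) \<in> E2} \<subseteq> f ` {u. (v,u) \<in> E1}"
    proof
      fix u assume "u \<in> {u. (f v,u) \<in> E2}"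
      then have "u \<in> V2" "(f v, u) \<in> E2" using s2 by auto
      then obtain w where "w \<in> V1" "u = f w" using im by auto
      then show "u \<in> f ` {u. (v,u) \<in> E1}" using e that \<open>(f v, u) \<in> E2\<close> by auto
    qed
    show "f ` {u. (v,u) \<in> E1} \<subseteq> {u. (f v,u) \<in> E2}" using e that s1 by auto
  qed
  have degv: "deg E2 (f v) = deg E1 v" if "v \<in> V1" for v
  proof -
    have "{u. (v,u) \<in> E1} \<subseteq> V1" using s1 by auto
    then have "inj_on f {u. (v,u) \<in> E1}" using inj inj_on_subset by blast
    then show ?thesis unfolding deg_def outs[OF that] by (simp add: card_image)
  qed
  then show "deg E2 (f v) = deg E1 v" using v .
  have "{w. (f v,w) \<in> E2 \<and> lp E2 w} = f ` {w. (v,w) \<in> E1 \<and> lp E1 w}"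
  proof -
    have "{w. (f v,w) \<in> E2 \<and> lp E2 w} = {w \<in> {u. (f v,u) \<in> E2}. lp E2 w}" by auto
    also have "\<dots> = {w \<in> f ` {u. (v,u) \<in> E1}. lp E2 w}" using outs[OF v] by simp
    also have "\<dots> = f ` {w. (v,w) \<in> E1 \<and> lp E1 w}"
      using s1 v e unfolding lp_def by blast
    finally show ?thesis .
  qed
  then have "col E2 (f v) = (deg E2 \<circ> f) ` {w. (v,w) \<in> E1 \<and> lp E1 w}"
    unfolding col_def by (simp add: image_comp)
  also have "\<dots> = col E1 v" unfolding col_def
    apply (rule image_cong[OF refl]) using degv s1 by auto
  finally show cv: "col E2 (f v) = col E1 v" .
  show "isTr k E2 (f v) = isTr k E1 v" unfolding isTr_def using cv lpv[OF v] by simp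
qed

lemma cnt_pos: "q \<in> init A \<union> fin A \<Longrightarrow> state_cnt k A q \<ge> k + 1"
  by (auto simp: state_cnt_def)
lemma cnt_zero: "q \<notin> init A \<union> fin A \<Longrightarrow> state_cnt k A q = 0"
  by (auto simp: state_cnt_def)
lemma cnt_init: "q \<in> init A \<longleftrightarrow> state_cnt k A q = k + 1 \<or> state_cnt k A q = k + 3"
  by (auto simp: state_cnt_def)
lemma cnt_fin: "q \<in> fin A \<longleftrightarrow> state_cnt k A q = k + 2 \<or> state_cnt k A q = k + 3"
  by (auto simp: state_cnt_def)

context
  fixes Sig :: "'a set" and A :: "('q,'a) nfa" and h :: "'a \<Rightarrow> nat" and k :: nat
  assumes wf: "nfa_wf Sig A" and hS: "\<forall>a\<in>Sig. 1 \<le> h a \<and> h a \<le> k"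
begin

lemma lbl_in: "t \<in> trans A \<Longrightarrow> lbl t \<in> Sig"
  using wf unfolding nfa_wf_def lbl_def by auto

lemma tr_states: "t \<in> trans A \<Longrightarrow> fst t \<in> states A \<and> snd (snd t) \<in> states A"
  using wf unfolding nfa_wf_def by auto

lemma if_states: "q \<in> init A \<union> fin A \<Longrightarrow> q \<in> states A"
  using wf unfolding nfa_wf_def by auto

lemma E_sub: "snd (nfa_graph h k A) \<subseteq> fst (nfa_graph h k A) \<times> fst (nfa_graph h k A)"
proof
  fix x assume "x \<in> snd (nfa_graph h k A)"
  then obtain u v where x: "x = (u,v)" and e: "edgeP A h k u v" using E_iff by (metis surj_pair)
  have "vertP A h k u \<and> vertP A h k v"
    using e hS lbl_in tr_states if_states cnt_pos[of _ A k]
    by (cases u; cases v) (auto, fastforce+)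
  then show "x \<in> fst (nfa_graph h k A) \<times> fst (nfa_graph h k A)" using x V_iff by auto
qed

lemma lp_G: "vertP A h k v \<Longrightarrow> lp (snd (nfa_graph h k A)) v \<longleftrightarrow> (case v of SAux _ _ \<Rightarrow> True | TAux _ _ \<Rightarrow> True | _ \<Rightarrow> False)"
  by (cases v) (auto simp: lp_def E_iff)

lemma deg_S: "q \<in> init A \<union> fin A \<Longrightarrow> deg (snd (nfa_graph h k A)) (SAux q 1) = state_cnt k A q"
proof -
  assume q: "q \<in> init A \<union> fin A"
  have "{u. (SAux q 1, u) \<in> snd (nfa_graph h k A)} = SAux q ` {1..state_cnt k A q}"
    apply (rule set_eqI) subgoal for u using q cnt_pos[of q A k] by (cases u) (auto simp: E_iff) done
  then show ?thesis unfolding deg_def by (simp add: card_image inj_on_def)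
qed

lemma deg_T: "t \<in> trans A \<Longrightarrow> deg (snd (nfa_graph h k A)) (TAux t 1) = h (lbl t)"
proof -
  assume t: "t \<in> trans A"
  have "{u. (TAux t 1, u) \<in> snd (nfa_graph h k A)} = TAux t ` {1..h (lbl t)}"
    apply (rule set_eqI) subgoal for u using t hS lbl_in[OF t] by (cases u) (auto simp: E_iff) done
  then show ?thesis unfolding deg_def by (simp add: card_image inj_on_def)
qed

lemma col_St: "q \<in> states A \<Longrightarrow> col (snd (nfa_graph h k A)) (St q) = (if q \<in> init A \<union> fin A then {state_cnt k A q} else {})"
proof -
  assume q: "q \<in> states A"
  have "{w. (St q, w) \<in> snd (nfa_graph h k A) \<and> lp (snd (nfa_graph h k A)) w} = (if q \<in> init A \<union> fin A then {SAux q 1} else {})"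
    apply (rule set_eqI) subgoal for u using cnt_pos[of q A k] by (cases u) (auto simp: E_iff lp_def) done
  then show ?thesis unfolding col_def using deg_S by auto
qed

lemma col_Tr: "t \<in> trans A \<Longrightarrow> col (snd (nfa_graph h k A)) (Tr t) = {h (lbl t)}"
proof -
  assume t: "t \<in> trans A"
  have "{w. (Tr t, w) \<in> snd (nfa_graph h k A) \<and> lp (snd (nfa_graph h k A)) w} = {TAux t 1}"
    apply (rule set_eqI) subgoal for u using t hS lbl_in[OF t] by (cases u) (auto simp: E_iff lp_def) done
  then show ?thesis unfolding col_def using deg_T[OF t] by auto
qed

lemma isTr_G: "vertP A h k v \<Longrightarrow> isTr k (snd (nfa_graph h k A)) v \<longleftrightarrow> (case v of Tr _ \<Rightarrow> True | _ \<Rightarrow> False)"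
proof (cases v)
  case (St q)
  assume "vertP A h k v"
  then show ?thesis using St col_St[of q] cnt_pos[of q A k] lp_G
    by (auto simp: isTr_def)
next
  case (Tr t)
  assume "vertP A h k v"
  then show ?thesis using Tr col_Tr[of t] hS lbl_in[of t] lp_G
    by (auto simp: isTr_def)
qed (auto simp: isTr_def lp_G)

end

fun unSt :: "('q,'a) gvert \<Rightarrow> 'q" where "unSt (St q) = q"

lemma col_St_alt:
  assumes "nfa_wf Sig A" "\<forall>a\<in>Sig. 1 \<le> h a \<and> h a \<le> k" "q \<in> states A"
  shows "col (snd (nfa_graph h k A)) (St q) = {state_cnt k A q} - {0}"
  using col_St[OF assms] cnt_pos[of q A k] cnt_zero[of q A k] by auto

lemma graph_to_nfa:
  fixes A1 :: "('q1,'a) nfa" and A2 :: "('q2,'a) nfa"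
  assumes wf1: "nfa_wf Sig A1" and wf2: "nfa_wf Sig A2"
    and hS: "\<forall>a\<in>Sig. 1 \<le> h a \<and> h a \<le> k" and hinj: "inj_on h Sig"
    and f: "bij_betw f (fst (nfa_graph h k A1)) (fst (nfa_graph h k A2))"
    and e: "\<forall>u\<in>fst (nfa_graph h k A1). \<forall>v\<in>fst (nfa_graph h k A1).
              (u,v) \<in> snd (nfa_graph h k A1) \<longleftrightarrow> (f u, f v) \<in> snd (nfa_graph h k A2)"
  shows "nfa_iso A1 A2"
proof -
  define V1 where "V1 = fst (nfa_graph h k A1)"
  define V2 where "V2 = fst (nfa_graph h k A2)"
  define E1 where "E1 = snd (nfa_graph h k A1)"
  define E2 where "E2 = snd (nfa_graph h k A2)"
  have f': "bij_betw f V1 V2" and e': "\<forall>u\<in>V1. \<forall>v\<in>V1. (u,v) \<in> E1 \<longleftrightarrow> (f u, f v) \<in> E2"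
    using f e by (simp_all add: V1_def V2_def E1_def E2_def)
  have s1: "E1 \<subseteq> V1 \<times> V1" unfolding E1_def V1_def by (rule E_sub[OF wf1 hS])
  have s2: "E2 \<subseteq> V2 \<times> V2" unfolding E2_def V2_def by (rule E_sub[OF wf2 hS])
  note inv = iso_inv[OF f' e' s1 s2]
  have V1i: "v \<in> V1 \<longleftrightarrow> vertP A1 h k v" for v unfolding V1_def by (rule V_iff)
  have V2i: "v \<in> V2 \<longleftrightarrow> vertP A2 h k v" for v unfolding V2_def by (rule V_iff)
  have fV: "v \<in> V1 \<Longrightarrow> f v \<in> V2" for v using f' by (auto simp: bij_betw_def)
  have fim: "f ` V1 = V2" and finj: "inj_on f V1" using f' by (auto simp: bij_betw_def)
  note lp1 = lp_G[OF wf1 hS, folded E1_def] and lp2 = lp_G[OF wf2 hS, folded E2_def]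
  note it1 = isTr_G[OF wf1 hS, folded E1_def] and it2 = isTr_G[OF wf2 hS, folded E2_def]
  have St_map: "\<exists>q'\<in>states A2. f (St q) = St q'" if q: "q \<in> states A1" for q
  proof -
    have v: "St q \<in> V1" using q V1i by simp
    have a: "\<not> lp E2 (f (St q))" using inv(1)[OF v] lp1[of "St q"] V1i v by simp
    have b: "\<not> isTr k E2 (f (St q))" using inv(4)[OF v] it1[of "St q"] V1i v by simp
    have c: "vertP A2 h k (f (St q))" using fV[OF v] V2i by simp
    show ?thesis using a b c lp2 it2 by (cases "f (St q)") auto
  qed
  have Tr_map: "\<exists>t'\<in>trans A2. f (Tr t) = Tr t'" if t: "t \<in> trans A1" for t
  proof -
    have v: "Tr t \<in> V1" using t V1i by simp
    have a: "\<not> lp E2 (f (Tr t))" using inv(1)[OF v] lp1[of "Tr t"] V1i v by simp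
    have b: "isTr k E2 (f (Tr t))" using inv(4)[OF v] it1[of "Tr t"] V1i v by simp
    have c: "vertP A2 h k (f (Tr t))" using fV[OF v] V2i by simp
    show ?thesis using a b c lp2 it2 by (cases "f (Tr t)") auto
  qed
  define \<phi> where "\<phi> q = unSt (f (St q))" for q
  have phi: "f (St q) = St (\<phi> q) \<and> \<phi> q \<in> states A2" if "q \<in> states A1" for q
    using St_map[OF that] unfolding \<phi>_def by auto
  have phi_inj: "inj_on \<phi> (states A1)"
  proof (rule inj_onI)
    fix p q assume p: "p \<in> states A1" and q: "q \<in> states A1" and eq: "\<phi> p = \<phi> q"
    have "f (St p) = f (St q)" using phi[OF p] phi[OF q] eq by simp
    moreover have "St p \<in> V1" "St q \<in> V1" using p q V1i by auto
    ultimately show "p = q" using finj by (auto dest: inj_onD)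
  qed
  have surj_gen: "\<exists>v\<in>V1. f v = w" if "w \<in> V2" for w using fim that by auto
  have phi_surj: "\<exists>q\<in>states A1. \<phi> q = q'" if q': "q' \<in> states A2" for q'
  proof -
    have w: "St q' \<in> V2" using q' V2i by simp
    obtain v where v: "v \<in> V1" "f v = St q'" using surj_gen[OF w] by blast
    have a: "\<not> lp E1 v" using inv(1)[OF v(1)] lp2[of "St q'"] V2i w v(2) by simp
    have b: "\<not> isTr k E1 v" using inv(4)[OF v(1)] it2[of "St q'"] V2i w v(2) by simp
    have c: "vertP A1 h k v" using v V1i by simp
    obtain q where "v = St q" using a b c lp1 it1 by (cases v) auto
    then show ?thesis using v c unfolding \<phi>_def by (metis unSt.simps vertP.simps(1))
  qed
  have Tr_surj: "\<exists>t\<in>trans A1. f (Tr t) = Tr t'" if t': "t' \<in> trans A2" for t'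
  proof -
    have w: "Tr t' \<in> V2" using t' V2i by simp
    obtain v where v: "v \<in> V1" "f v = Tr t'" using surj_gen[OF w] by blast
    have a: "\<not> lp E1 v" using inv(1)[OF v(1)] lp2[of "Tr t'"] V2i w v(2) by simp
    have b: "isTr k E1 v" using inv(4)[OF v(1)] it2[of "Tr t'"] V2i w v(2) by simp
    have c: "vertP A1 h k v" using v V1i by simp
    obtain t where "v = Tr t" using a b c lp1 it1 by (cases v) auto
    then show ?thesis using v c by auto
  qed
  have fwd: "f (Tr (p,a,q)) = Tr (\<phi> p, a, \<phi> q)" if t: "(p,a,q) \<in> trans A1" for p a q
  proof -
    obtain t' where t': "t' \<in> trans A2" "f (Tr (p,a,q)) = Tr t'" using Tr_map[OF t] by blast
    have pq: "p \<in> states A1" "q \<in> states A1" using tr_states[OF wf1 hS t] by auto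
    have vs: "St p \<in> V1" "St q \<in> V1" "Tr (p,a,q) \<in> V1" using pq t V1i by auto
    have "(St p, Tr (p,a,q)) \<in> E1" "(Tr (p,a,q), St q) \<in> E1" using t unfolding E1_def E_iff by auto
    then have "(St (\<phi> p), Tr t') \<in> E2" "(Tr t', St (\<phi> q)) \<in> E2"
      using e' vs phi[OF pq(1)] phi[OF pq(2)] t'(2) by force+
    then have 1: "fst t' = \<phi> p" "snd (snd t') = \<phi> q" unfolding E2_def E_iff by auto
    have "col E2 (Tr t') = col E1 (Tr (p,a,q))" using inv(3)[OF vs(3)] t'(2) by simp
    then have "h (lbl t') = h a"
      using col_Tr[OF wf1 hS t, folded E1_def] col_Tr[OF wf2 hS t'(1), folded E2_def]
      by (simp add: lbl_def)
    then have "lbl t' = a" using hinj lbl_in[OF wf2 hS t'(1)] lbl_in[OF wf1 hS t] by (auto simp: lbl_def inj_on_def)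
    then have "t' = (\<phi> p, a, \<phi> q)" using 1 by (cases t') (auto simp: lbl_def)
    then show ?thesis using t' by simp
  qed
  have cnt_eq: "state_cnt k A2 (\<phi> q) = state_cnt k A1 q" if q: "q \<in> states A1" for q
  proof -
    have v: "St q \<in> V1" using q V1i by simp
    have "col E2 (St (\<phi> q)) = col E1 (St q)" using inv(3)[OF v] phi[OF q] by simp
    then have "{state_cnt k A2 (\<phi> q)} - {0} = {state_cnt k A1 q} - {0}"
      using col_St_alt[OF wf1 hS q, folded E1_def] col_St_alt[OF wf2 hS, of "\<phi> q", folded E2_def] phi[OF q]
      by simp
    then show ?thesis by (cases "state_cnt k A1 q = 0"; cases "state_cnt k A2 (\<phi> q) = 0") auto
  qed
  have init1: "init A1 \<subseteq> states A1" "fin A1 \<subseteq> states A1" using wf1 by (auto simp: nfa_wf_def)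
  have init2: "init A2 \<subseteq> states A2" "fin A2 \<subseteq> states A2" using wf2 by (auto simp: nfa_wf_def)
  have bij: "bij_betw \<phi> (states A1) (states A2)"
    unfolding bij_betw_def using phi_inj phi phi_surj by auto
  have I: "\<phi> ` init A1 = init A2"
  proof
    show "\<phi> ` init A1 \<subseteq> init A2" using init1 cnt_eq cnt_init[of _ A1 k] cnt_init[of _ A2 k] by fastforce
    show "init A2 \<subseteq> \<phi> ` init A1"
    proof
      fix q' assume q': "q' \<in> init A2"
      then obtain q where q: "q \<in> states A1" "\<phi> q = q'" using phi_surj init2 by blast
      then have "q \<in> init A1" using q' cnt_eq[OF q(1)] cnt_init[of _ A1 k] cnt_init[of _ A2 k] by metis
      then show "q' \<in> \<phi> ` init A1" using q by blast
    qed
  qed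
  have F: "\<phi> ` fin A1 = fin A2"
  proof
    show "\<phi> ` fin A1 \<subseteq> fin A2" using init1 cnt_eq cnt_fin[of _ A1 k] cnt_fin[of _ A2 k] by fastforce
    show "fin A2 \<subseteq> \<phi> ` fin A1"
    proof
      fix q' assume q': "q' \<in> fin A2"
      then obtain q where q: "q \<in> states A1" "\<phi> q = q'" using phi_surj init2 by blast
      then have "q \<in> fin A1" using q' cnt_eq[OF q(1)] cnt_fin[of _ A1 k] cnt_fin[of _ A2 k] by metis
      then show "q' \<in> \<phi> ` fin A1" using q by blast
    qed
  qed
  have T: "(p, a, q) \<in> trans A1 \<longleftrightarrow> (\<phi> p, a, \<phi> q) \<in> trans A2"
    if pq: "p \<in> states A1" "q \<in> states A1" for p a q
  proof
    assume "(p, a, q) \<in> trans A1"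
    then show "(\<phi> p, a, \<phi> q) \<in> trans A2" using fwd Tr_map by fastforce
  next
    assume t': "(\<phi> p, a, \<phi> q) \<in> trans A2"
    obtain t where t: "t \<in> trans A1" "f (Tr t) = Tr (\<phi> p, a, \<phi> q)" using Tr_surj[OF t'] by blast
    obtain p1 a1 q1 where t1: "t = (p1,a1,q1)" by (cases t)
    have "p1 \<in> states A1" "q1 \<in> states A1" using tr_states[OF wf1 hS t(1)] t1 by auto
    moreover have "\<phi> p1 = \<phi> p" "a1 = a" "\<phi> q1 = \<phi> q" using fwd[of p1 a1 q1] t t1 by auto
    ultimately have "p1 = p" "q1 = q" using phi_inj pq by (auto dest: inj_onD)
    then show "(p, a, q) \<in> trans A1" using t t1 \<open>a1 = a\<close> by simp
  qed
  show ?thesis unfolding nfa_iso_def using bij I F T by blast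
qed

definition tm :: "('q1 \<Rightarrow> 'q2) \<Rightarrow> 'q1 \<times> 'a \<times> 'q1 \<Rightarrow> 'q2 \<times> 'a \<times> 'q2" where
  "tm \<phi> t = (\<phi> (fst t), fst (snd t), \<phi> (snd (snd t)))"

fun gmap :: "('q1 \<Rightarrow> 'q2) \<Rightarrow> ('q1,'a) gvert \<Rightarrow> ('q2,'a) gvert" where
  "gmap \<phi> (St q) = St (\<phi> q)"
| "gmap \<phi> (Tr t) = Tr (tm \<phi> t)"
| "gmap \<phi> (SAux q i) = SAux (\<phi> q) i"
| "gmap \<phi> (TAux t i) = TAux (tm \<phi> t) i"

lemma nfa_to_graph:
  fixes A1 :: "('q1,'a) nfa" and A2 :: "('q2,'a) nfa"
  assumes wf1: "nfa_wf Sig A1" and wf2: "nfa_wf Sig A2"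
    and bij: "bij_betw \<phi> (states A1) (states A2)"
    and I: "\<phi> ` init A1 = init A2" and F: "\<phi> ` fin A1 = fin A2"
    and T: "\<forall>p\<in>states A1. \<forall>a. \<forall>q\<in>states A1. (p, a, q) \<in> trans A1 \<longleftrightarrow> (\<phi> p, a, \<phi> q) \<in> trans A2"
  shows "digraph_iso (nfa_graph h k A1) (nfa_graph h k A2)"
proof -
  have st1: "init A1 \<subseteq> states A1" "fin A1 \<subseteq> states A1" "trans A1 \<subseteq> states A1 \<times> Sig \<times> states A1"
    using wf1 by (auto simp: nfa_wf_def)
  have st2: "init A2 \<subseteq> states A2" "fin A2 \<subseteq> states A2" "trans A2 \<subseteq> states A2 \<times> Sig \<times> states A2"
    using wf2 by (auto simp: nfa_wf_def)
  have phinj: "\<phi> p = \<phi> q \<longleftrightarrow> p = q" if "p \<in> states A1" "q \<in> states A1" for p q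
    using bij that by (auto simp: bij_betw_def dest: inj_onD)
  have phiinj: "inj_on \<phi> (states A1)" using bij by (simp add: bij_betw_def)
  have phim: "\<phi> ` states A1 = states A2" using bij by (auto simp: bij_betw_def)
  have tm_in: "tm \<phi> t \<in> trans A2 \<longleftrightarrow> t \<in> trans A1" if "fst t \<in> states A1" "snd (snd t) \<in> states A1" for t
    using T that by (cases t) (auto simp: tm_def)
  have tm_surj: "\<exists>t\<in>trans A1. tm \<phi> t = t'" if t': "t' \<in> trans A2" for t'
  proof -
    obtain p' a q' where t'e: "t' = (p',a,q')" by (cases t')
    then have "p' \<in> states A2" "q' \<in> states A2" using t' st2 by auto
    then have "p' \<in> \<phi> ` states A1" "q' \<in> \<phi> ` states A1" using phim by auto
    then obtain p q where pq: "p \<in> states A1" "q \<in> states A1" "\<phi> p = p'" "\<phi> q = q'" by (metis imageE)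
    moreover have "(p,a,q) \<in> trans A1 \<longleftrightarrow> (\<phi> p, a, \<phi> q) \<in> trans A2" using T pq(1,2) by blast
    ultimately have "(p,a,q) \<in> trans A1" using t' t'e by simp
    moreover have "tm \<phi> (p,a,q) = t'" using pq t'e by (simp add: tm_def)
    ultimately show ?thesis by blast
  qed
  have tm_inj: "tm \<phi> t = tm \<phi> t' \<longleftrightarrow> t = t'" if "t \<in> trans A1" "t' \<in> trans A1" for t t'
    using that st1(3) phinj by (cases t; cases t') (auto simp: tm_def)
  have lbl_tm: "lbl (tm \<phi> t) = lbl t" for t by (simp add: tm_def lbl_def)
  have fst_tm: "fst (tm \<phi> t) = \<phi> (fst t)" "snd (snd (tm \<phi> t)) = \<phi> (snd (snd t))" for t
    by (simp_all add: tm_def)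
  have Ii: "\<phi> q \<in> init A2 \<longleftrightarrow> q \<in> init A1" if "q \<in> states A1" for q
    using inj_on_image_mem_iff[OF phiinj that st1(1)] I by simp
  have Fi: "\<phi> q \<in> fin A2 \<longleftrightarrow> q \<in> fin A1" if "q \<in> states A1" for q
    using inj_on_image_mem_iff[OF phiinj that st1(2)] F by simp
  have cnt: "state_cnt k A2 (\<phi> q) = state_cnt k A1 q" if "q \<in> states A1" for q
    using Ii[OF that] Fi[OF that] by (simp add: state_cnt_def)
  have trst: "fst t \<in> states A1 \<and> snd (snd t) \<in> states A1" if "t \<in> trans A1" for t
    using that st1(3) by auto
  have vsurj: "\<exists>v. vertP A1 h k v \<and> gmap \<phi> v = w" if w: "vertP A2 h k w" for w
  proof (cases w)
    case (St q')
    then have "q' \<in> \<phi> ` states A1" using w phim by simp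
    then obtain q where q: "q \<in> states A1" "\<phi> q = q'" by (metis imageE)
    have "vertP A1 h k (St q) \<and> gmap \<phi> (St q) = w" using q St by simp
    then show ?thesis by blast
  next
    case (Tr t')
    then have "t' \<in> trans A2" using w by simp
    then obtain t where t: "t \<in> trans A1" "tm \<phi> t = t'" using tm_surj by blast
    have "vertP A1 h k (Tr t) \<and> gmap \<phi> (Tr t) = w" using t Tr by simp
    then show ?thesis by blast
  next
    case (SAux q' i)
    then have "q' \<in> states A2" using w st2 by auto
    then have "q' \<in> \<phi> ` states A1" using phim by simp
    then obtain q where q: "q \<in> states A1" "\<phi> q = q'" by (metis imageE)
    have "vertP A1 h k (SAux q i)" using w SAux Ii[OF q(1)] Fi[OF q(1)] cnt[OF q(1)] q(2) by auto
    moreover have "gmap \<phi> (SAux q i) = w" using q SAux by simp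
    ultimately show ?thesis by blast
  next
    case (TAux t' i)
    then have "t' \<in> trans A2" using w by simp
    then obtain t where t: "t \<in> trans A1" "tm \<phi> t = t'" using tm_surj by blast
    have "vertP A1 h k (TAux t i)" using w TAux t lbl_tm[of t] by auto
    moreover have "gmap \<phi> (TAux t i) = w" using t TAux by simp
    ultimately show ?thesis by blast
  qed
  have if1: "q \<in> states A1" if "q \<in> init A1" for q using that st1 by auto
  have if2: "q \<in> states A1" if "q \<in> fin A1" for q using that st1 by auto
  have trst1: "fst t \<in> states A1" and trst2: "snd (snd t) \<in> states A1" if "t \<in> trans A1" for t
    using trst[OF that] by auto
  have tm_in': "tm \<phi> t \<in> trans A2" if "t \<in> trans A1" for t
    using tm_in trst1 trst2 that by blast
  have vmap: "vertP A2 h k (gmap \<phi> v)" if "vertP A1 h k v" for v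
    using that
    by (cases v) (auto simp add: tm_in' lbl_tm Ii Fi cnt if1 if2 phim[symmetric])
  have ginj: "gmap \<phi> u = gmap \<phi> v \<longleftrightarrow> u = v" if "vertP A1 h k u" "vertP A1 h k v" for u v
    using that by (cases u; cases v) (auto simp add: phinj tm_inj if1 if2)
  have gedge: "edgeP A2 h k (gmap \<phi> u) (gmap \<phi> v) \<longleftrightarrow> edgeP A1 h k u v"
    if "vertP A1 h k u" "vertP A1 h k v" for u v
    using that by (cases u; cases v) (auto simp add: phinj tm_inj if1 if2 tm_in' trst1 trst2 fst_tm lbl_tm Ii Fi cnt)
  show ?thesis unfolding digraph_iso_def
  proof (intro exI conjI ballI)
    show "bij_betw (gmap \<phi>) (fst (nfa_graph h k A1)) (fst (nfa_graph h k A2))"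
    proof (unfold bij_betw_def, intro conjI)
      show "inj_on (gmap \<phi>) (fst (nfa_graph h k A1))"
        by (rule inj_onI) (simp add: V_iff ginj)
      show "gmap \<phi> ` fst (nfa_graph h k A1) = fst (nfa_graph h k A2)"
      proof
        show "gmap \<phi> ` fst (nfa_graph h k A1) \<subseteq> fst (nfa_graph h k A2)"
          using vmap by (auto simp: V_iff)
        show "fst (nfa_graph h k A2) \<subseteq> gmap \<phi> ` fst (nfa_graph h k A1)"
        proof
          fix w assume "w \<in> fst (nfa_graph h k A2)"
          then have "vertP A2 h k w" by (simp add: V_iff)
          then obtain v where "vertP A1 h k v" "gmap \<phi> v = w" using vsurj by blast
          then show "w \<in> gmap \<phi> ` fst (nfa_graph h k A1)" by (auto simp: V_iff)
        qed
      qed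
    qed
    fix u v assume "u \<in> fst (nfa_graph h k A1)" "v \<in> fst (nfa_graph h k A1)"
    then show "((u, v) \<in> snd (nfa_graph h k A1)) = ((gmap \<phi> u, gmap \<phi> v) \<in> snd (nfa_graph h k A2))"
      using gedge by (simp add: V_iff E_iff)
  qed
qed

theorem proposition4:
  fixes Sig :: "'a set" and h :: "'a \<Rightarrow> nat"
    and A1 :: "('q1, 'a) nfa" and A2 :: "('q2, 'a) nfa"
  assumes "finite Sig"
    and "bij_betw h Sig {1..card Sig}"
    and "nfa_wf Sig A1" and "nfa_wf Sig A2"
  shows "nfa_iso A1 A2 \<longleftrightarrow>
         digraph_iso (nfa_graph h (card Sig) A1) (nfa_graph h (card Sig) A2)"
proof
  assume "nfa_iso A1 A2"
  then show "digraph_iso (nfa_graph h (card Sig) A1) (nfa_graph h (card Sig) A2)"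
  proof -
    obtain \<phi> where H: "bij_betw \<phi> (states A1) (states A2) \<and> \<phi> ` init A1 = init A2 \<and> \<phi> ` fin A1 = fin A2 \<and>
      (\<forall>p\<in>states A1. \<forall>a. \<forall>q\<in>states A1. (p, a, q) \<in> trans A1 \<longleftrightarrow> (\<phi> p, a, \<phi> q) \<in> trans A2)"
      using \<open>nfa_iso A1 A2\<close> unfolding nfa_iso_def by (elim exE)
    show ?thesis by (rule nfa_to_graph[OF assms(3,4) conjunct1[OF H] conjunct1[OF conjunct2[OF H]]
      conjunct1[OF conjunct2[OF conjunct2[OF H]]] conjunct2[OF conjunct2[OF conjunct2[OF H]]]])
  qed
next
  have im: "h ` Sig = {1..card Sig}" and hinj: "inj_on h Sig"
    using assms(2) by (simp_all add: bij_betw_def)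
  have hS: "\<forall>a\<in>Sig. 1 \<le> h a \<and> h a \<le> card Sig"
  proof
    fix a assume "a \<in> Sig"
    then have "h a \<in> {1..card Sig}" using im by blast
    then show "1 \<le> h a \<and> h a \<le> card Sig" by simp
  qed
  assume "digraph_iso (nfa_graph h (card Sig) A1) (nfa_graph h (card Sig) A2)"
  then obtain f where "bij_betw f (fst (nfa_graph h (card Sig) A1)) (fst (nfa_graph h (card Sig) A2))"
    "\<forall>u\<in>fst (nfa_graph h (card Sig) A1). \<forall>v\<in>fst (nfa_graph h (card Sig) A1).
              (u,v) \<in> snd (nfa_graph h (card Sig) A1) \<longleftrightarrow> (f u, f v) \<in> snd (nfa_graph h (card Sig) A2)"
    unfolding digraph_iso_def by blast
  then show "nfa_iso A1 A2" by (rule graph_to_nfa[OF assms(3,4) hS hinj])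
qed

end
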